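(* Let $R=\mathbb{Z}_4+u\mathbb{Z}_4$ with $u^2=0$, and let $C=\langle a(x)+ub(x)\rangle$ be the $(1+2u)$-constacyclic code of length $n$ over $R$ given by the ideal of $R[x]/\langle x^n-(1+2u)\rangle$ generated by $a(x)+ub(x)$, where $a(x),b(x)\in\mathbb{Z}_4[x]$ have degree $<n$. Let $\phi:R^n\to\mathbb{Z}_4^{2n}$ be the Gray map $\phi(c_0,\dots,c_{n-1})=(b_0,\dots,b_{n-1},2a_0+b_0,\dots,2a_{n-1}+b_{n-1})$ with $c_i=a_i+ub_i$. Then $\phi(C)$ is a cyclic code over $\mathbb{Z}_4$ of length $2n$, namely the ideal of $\mathbb{Z}_4[x]/\langle x^{2n}-1\rangle$ generated by the polynomials $b(x)+x^n(2a(x)+b(x))$ and $a(x)+x^na(x)$.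
   Context: Vectors $(c_0,\dots,c_{m-1})$ are identified with polynomials $\sum_i c_ix^i$; thus codes of length $n$ over $R$ are subsets of $R[x]/\langle x^n-(1+2u)\rangle$ and codes of length $2n$ over $\mathbb{Z}_4$ are subsets of $\mathbb{Z}_4[x]/\langle x^{2n}-1\rangle$, where cyclic codes are exactly ideals. *)

theory Defs
  imports "HOL-Library.Numeral_Type" "HOL-Computational_Algebra.Polynomial"
begin

text \<open>The ring Z4 is the numeral type 4.  The ring R = Z4 + u Z4 with u^2 = 0:
  an element Rel a b stands for a + u b.\<close>

datatype R = Rel (re: "4") (nu: "4")

instantiation R :: comm_ring_1
begin
definition "zero_R = Rel 0 0"
definition "one_R = Rel 1 0"
definition "plus_R x y = Rel (re x + re y) (nu x + nu y)"
definition "minus_R x y = Rel (re x - re y) (nu x - nu y)"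
definition "uminus_R x = Rel (- re x) (- nu x)"
definition "times_R x y = Rel (re x * re y) (re x * nu y + nu x * re y)"
instance
  by standard (auto simp: zero_R_def one_R_def plus_R_def minus_R_def uminus_R_def
                 times_R_def algebra_simps intro: R.expand)
end

definition u :: R where "u = Rel 0 1"
definition emb :: "4 \<Rightarrow> R" where "emb c = Rel c 0"

definition plus_u :: "4 poly \<Rightarrow> 4 poly \<Rightarrow> R poly" where
  "plus_u a b = map_poly emb a + smult u (map_poly emb b)"

text \<open>A code of length n given by polynomials of degree < n (vector (c_0..c_{n-1})
  identified with sum c_i x^i).\<close>
definition deg_lt :: "nat \<Rightarrow> 'a::zero poly \<Rightarrow> bool" where
  "deg_lt n p \<longleftrightarrow> (\<forall>i\<ge>n. coeff p i = 0)"

text \<open>The (1+2u)-constacyclic code of length n generated by g: the ideal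
  generated by g in R[x]/(x^n - (1+2u)), via its canonical representatives of degree < n.\<close>
definition constacyclic_code :: "nat \<Rightarrow> R poly \<Rightarrow> R poly set" where
  "constacyclic_code n g = {c. deg_lt n c \<and>
      (\<exists>r s. c = r * g + s * (monom 1 n - [:1 + 2 * u:]))}"

text \<open>The cyclic code of length m over Z4 generated by g1 and g2: the ideal
  generated by g1, g2 in Z4[x]/(x^m - 1), via representatives of degree < m.\<close>
definition cyclic_code2 :: "nat \<Rightarrow> 4 poly \<Rightarrow> 4 poly \<Rightarrow> 4 poly set" where
  "cyclic_code2 m g1 g2 = {v. deg_lt m v \<and>
      (\<exists>r1 r2 s. v = r1 * g1 + r2 * g2 + s * (monom 1 m - 1))}"

text \<open>Gray map on length-n words: c_i = a_i + u b_i is sent to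
  (b_0..b_{n-1}, 2a_0+b_0, .., 2a_{n-1}+b_{n-1}), i.e. as polynomials
  b(x) + x^n (2a(x) + b(x)).\<close>
definition gray :: "nat \<Rightarrow> R poly \<Rightarrow> 4 poly" where
  "gray n c = map_poly nu c + monom 1 n * (smult 2 (map_poly re c) + map_poly nu c)"

end

theory Submission imports Defs begin

abbreviation RE where "RE p \<equiv> map_poly re p"
abbreviation NU where "NU p \<equiv> map_poly nu p"

lemma re0[simp]: "re 0 = 0" and nu0[simp]: "nu 0 = 0" by (simp_all add: zero_R_def)
lemma re_add: "re (x+y) = re x + re y" and nu_add: "nu (x+y) = nu x + nu y"
  by (simp_all add: plus_R_def)
lemma re_mult: "re (x*y) = re x * re y" and nu_mult: "nu (x*y) = re x * nu y + nu x * re y"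
  by (simp_all add: times_R_def)
lemma re_sum: "re (sum f A) = (\<Sum>i\<in>A. re (f i))"
  by (induction A rule: infinite_finite_induct) (auto simp: re_add)
lemma nu_sum: "nu (sum f A) = (\<Sum>i\<in>A. nu (f i))"
  by (induction A rule: infinite_finite_induct) (auto simp: nu_add)

lemma RE_add: "RE (p+q) = RE p + RE q"
  by (rule poly_eqI) (simp add: coeff_map_poly re_add)
lemma NU_add: "NU (p+q) = NU p + NU q"
  by (rule poly_eqI) (simp add: coeff_map_poly nu_add)
lemma RE_mult: "RE (p*q) = RE p * RE q"
  by (rule poly_eqI) (simp add: coeff_map_poly coeff_mult re_sum re_mult)
lemma NU_mult: "NU (p*q) = RE p * NU q + NU p * RE q"
  by (rule poly_eqI) (simp add: coeff_map_poly coeff_mult nu_sum nu_mult sum.distrib)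

lemma gray_add: "gray n (p+q) = gray n p + gray n q"
  by (simp add: gray_def RE_add NU_add algebra_simps smult_add_right)

lemma gray_mult: "gray n (s*h) = RE s * gray n h + NU s * (RE h + monom 1 n * RE h)"
  by (simp add: gray_def RE_mult NU_mult algebra_simps)

lemma re_emb[simp]: "re (emb c) = c" and nu_emb[simp]: "nu (emb c) = 0"
  by (simp_all add: emb_def)
lemma re_u[simp]: "re u = 0" and nu_u[simp]: "nu u = 1" by (simp_all add: u_def)

lemma emb0[simp]: "emb 0 = 0" by (simp add: emb_def zero_R_def)
lemma two_R: "(2::R) = 1 + 1" by simp
lemma re2[simp]: "re 2 = 2" and nu2[simp]: "nu 2 = 0"
  by (simp_all only: two_R re_add nu_add, simp_all add: one_R_def)

lemma RE_plus_u: "RE (plus_u a b) = a"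
  by (rule poly_eqI) (simp add: plus_u_def coeff_map_poly re_add re_mult)
lemma NU_plus_u: "NU (plus_u a b) = b"
  by (rule poly_eqI) (simp add: plus_u_def coeff_map_poly nu_add nu_mult)

definition mm :: "nat \<Rightarrow> R poly" where "mm n = monom 1 n - [:1 + 2 * u:]"

lemma re_one[simp]: "re 1 = 1" and nu_one[simp]: "nu 1 = 0" by (simp_all add: one_R_def)
lemma re_minus: "re (x - y) = re x - re y" and nu_minus: "nu (x - y) = nu x - nu y"
  by (simp_all add: minus_R_def)
lemma re_2u: "re (1 + 2 * u) = 1" and nu_2u: "nu (1 + 2*u) = 2"
  by (simp_all add: re_add nu_add re_mult nu_mult)

lemma RE_mm: "RE (mm n) = monom 1 n - 1"
  by (rule poly_eqI) (simp add: mm_def coeff_map_poly re_minus coeff_monom re_2u coeff_pCons split: nat.split)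
lemma NU_mm: "NU (mm n) = - [:2:]"
  by (rule poly_eqI) (auto simp: mm_def coeff_map_poly nu_minus coeff_monom nu_2u coeff_pCons split: nat.split)

lemma deg_lt0: "deg_lt 0 p \<longleftrightarrow> p = 0"
  by (auto simp: deg_lt_def poly_eq_iff)

lemma gray_mm: "gray n (mm n) = smult 2 (monom 1 (2*n) - 1)"
proof -
  have "gray n (mm n) = - [:2:] + monom 1 n * (smult 2 (monom 1 n - 1) + [:-2:])"
    by (simp add: gray_def RE_mm NU_mm minus_pCons)
  also have "\<dots> = smult 2 (monom 1 (2*n) - 1)"
    by (rule poly_eqI) (auto simp: coeff_monom_mult coeff_monom coeff_pCons split: nat.split)
  finally show ?thesis .
qed

lemma RE_mm2: "RE (mm n) + monom 1 n * RE (mm n) = monom 1 (2*n) - 1"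
  by (simp add: RE_mm algebra_simps mult_monom flip: mult_2)

lemma deg_lt_gray: "deg_lt n c \<Longrightarrow> deg_lt (2*n) (gray n c)"
  by (auto simp: deg_lt_def gray_def coeff_monom_mult coeff_map_poly)

lemma degree_M: "0 < m \<Longrightarrow> degree (monom 1 m - 1 :: 'a::comm_ring_1 poly) = m"
proof -
  assume m: "0 < m"
  have "coeff (monom 1 m - 1 :: 'a poly) m = 1" using m by simp
  hence "m \<le> degree (monom 1 m - 1 :: 'a poly)" by (intro le_degree) simp
  moreover have "degree (monom 1 m - 1 :: 'a poly) \<le> m"
    by (intro degree_le) (auto simp: coeff_monom)
  ultimately show ?thesis by simp
qed

lemma kill_M:
  fixes k :: "'a::comm_ring_1 poly"
  assumes m: "0 < m" and d: "deg_lt m (k * (monom 1 m - 1))"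
  shows "k * (monom 1 m - 1) = 0"
proof (cases "k = 0")
  case False
  have "coeff (k * (monom 1 m - 1)) (degree k + m) = lead_coeff k"
    using coeff_mult_degree_sum[of k "monom 1 m - 1"] m by (simp add: degree_M)
  moreover have "coeff (k * (monom 1 m - 1)) (degree k + m) = 0"
    using d by (simp add: deg_lt_def)
  ultimately show ?thesis using False by simp
qed simp

lemma reduce:
  assumes n: "0 < n"
  shows "\<forall>w. deg_lt k w \<longrightarrow> (\<exists>t c. deg_lt n c \<and> c = w + t * mm n)"
proof (induction k)
  case 0
  then show ?case by (auto simp: deg_lt_def intro!: exI[of _ 0])
next
  case (Suc k)
  show ?case
  proof (intro allI impI)
    fix w :: "R poly" assume w: "deg_lt (Suc k) w"
    show "\<exists>t c. deg_lt n c \<and> c = w + t * mm n"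
    proof (cases "k < n")
      case True
      then have "deg_lt n w" using w by (auto simp: deg_lt_def)
      then show ?thesis by (intro exI[of _ 0] exI[of _ w]) simp
    next
      case False
      define w' where "w' = w - monom (coeff w k) (k - n) * mm n"
      have "deg_lt k w'"
        unfolding deg_lt_def
      proof (intro allI impI)
        fix i assume i: "k \<le> i"
        have c1: "coeff [:1 + 2 * u:] (i - (k - n)) = 0"
          using i False n by (simp add: coeff_pCons split: nat.split)
        show "coeff w' i = 0"
          using i False w c1 by (cases "i = k") (auto simp: w'_def coeff_monom_mult mm_def coeff_monom deg_lt_def)
      qed
      with Suc.IH obtain t c where h1: "deg_lt n c" and h2: "c = w' + t * mm n" by blast
      have "c = w + (t - monom (coeff w k) (k - n)) * mm n"
        using h2 by (simp add: w'_def algebra_simps)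
      with h1 show ?thesis by blast
    qed
  qed
qed

lemma gray_g: "gray n (plus_u a b) = b + monom 1 n * (smult 2 a + b)"
  by (simp add: gray_def RE_plus_u NU_plus_u)

lemma RE_g2: "RE (plus_u a b) + monom 1 n * RE (plus_u a b) = a + monom 1 n * a"
  by (simp add: RE_plus_u)

theorem theorem5p6:
  fixes n :: nat and a b :: "4 poly"
  assumes "deg_lt n a" and "deg_lt n b"
  shows "gray n ` constacyclic_code n (plus_u a b)
       = cyclic_code2 (2 * n) (b + monom 1 n * (smult 2 a + b)) (a + monom 1 n * a)"
proof (cases "n = 0")
  case True
  then have "a = 0" "b = 0" using assms by (simp_all add: deg_lt0)
  then show ?thesis using True
    by (auto simp: constacyclic_code_def cyclic_code2_def deg_lt0 gray_def image_iff
        intro!: exI[of _ 0])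
next
  case False
  hence n: "0 < n" by simp
  define g where "g = plus_u a b"
  define M where "M = (monom 1 (2*n) - 1 :: 4 poly)"
  have gm: "gray n (s * mm n) = (smult 2 (RE s) + NU s) * M" for s
    by (simp add: gray_mult gray_mm RE_mm2 M_def algebra_simps smult_diff_right smult_add_right)
  have gg: "gray n (r * g) = RE r * (b + monom 1 n * (smult 2 a + b)) + NU r * (a + monom 1 n * a)" for r
    by (simp add: gray_mult g_def gray_g RE_g2)
  show ?thesis
  proof
    show "gray n ` constacyclic_code n (plus_u a b)
       \<subseteq> cyclic_code2 (2 * n) (b + monom 1 n * (smult 2 a + b)) (a + monom 1 n * a)"
    proof
      fix v assume "v \<in> gray n ` constacyclic_code n (plus_u a b)"
      then obtain c r s where c: "deg_lt n c" "c = r * g + s * mm n" "v = gray n c"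
        by (auto simp: constacyclic_code_def g_def mm_def)
      have "v = RE r * (b + monom 1 n * (smult 2 a + b)) + NU r * (a + monom 1 n * a)
              + (smult 2 (RE s) + NU s) * M"
        using c by (simp add: gray_add gg gm)
      then show "v \<in> cyclic_code2 (2 * n) (b + monom 1 n * (smult 2 a + b)) (a + monom 1 n * a)"
        unfolding cyclic_code2_def M_def mem_Collect_eq using deg_lt_gray[OF c(1)] c(3)
        by (intro conjI exI) (auto simp: M_def)
    qed
  next
    show "cyclic_code2 (2 * n) (b + monom 1 n * (smult 2 a + b)) (a + monom 1 n * a)
       \<subseteq> gray n ` constacyclic_code n (plus_u a b)"
    proof
      fix v assume "v \<in> cyclic_code2 (2 * n) (b + monom 1 n * (smult 2 a + b)) (a + monom 1 n * a)"
      then obtain r1 r2 s where v: "deg_lt (2*n) v"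
        "v = r1 * (b + monom 1 n * (smult 2 a + b)) + r2 * (a + monom 1 n * a) + s * M"
        by (auto simp: cyclic_code2_def M_def)
      define w where "w = plus_u r1 r2 * g"
      have "deg_lt (Suc (degree w)) w" by (simp add: deg_lt_def coeff_eq_0)
      then obtain t c where c: "deg_lt n c" "c = w + t * mm n"
        using reduce[OF n] by blast
      have cC: "c \<in> constacyclic_code n (plus_u a b)"
        unfolding constacyclic_code_def using c by (auto simp: w_def g_def mm_def)
      have gc: "gray n c = r1 * (b + monom 1 n * (smult 2 a + b)) + r2 * (a + monom 1 n * a)
           + (smult 2 (RE t) + NU t) * M"
        using c by (simp add: gray_add gg gm w_def RE_plus_u NU_plus_u)
      have "gray n c - v = (smult 2 (RE t) + NU t - s) * M"
        using gc v by (simp add: algebra_simps)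
      moreover have "deg_lt (2*n) (gray n c - v)"
        using deg_lt_gray[OF c(1)] v(1) by (simp add: deg_lt_def)
      ultimately have "gray n c - v = 0"
        using kill_M[of "2*n" "smult 2 (RE t) + NU t - s"] n by (simp add: M_def)
      then show "v \<in> gray n ` constacyclic_code n (plus_u a b)"
        using cC by (auto simp: image_iff intro!: bexI[of _ c])
    qed
  qed
qed

end
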